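(* Let $d>1$, $e\geq 1$, $n\geq 1$. A basis of $H^\bullet(\Gamma(de,e,n);\mathbb{Q})$ is naturally indexed by the orbits, under the action of $W=G(de,e,n)$, of the set of invariant $de$-multigraphs with loops on $n$ vertices: for each orbit with representative $\Delta$, the class $\sum_{w\in W}w(\omega_\Delta)$ is nonzero, and these classes form a basis, the class of $\Delta$ having degree equal to the number of edges plus loops of $\Delta$.
   Context: For a finite complex reflection group $W$ with hyperplane set $\mathcal A$, $P=\pi_1(\mathbb{C}^\ell\setminus\bigcup\mathcal A)$, $B=\pi_1((\mathbb{C}^\ell\setminus\bigcup\mathcal A)/W)$, $\Gamma=B/[P,P]$; then $H^\bullet(\Gamma;\mathbb{Q})\cong\Lambda^\bullet(\mathbb{Q}\mathcal A)^W$, where the degree-one part has basis the forms $d\log$ of the hyperplanes' linear forms, permuted by $W$. $G(de,e,n)$ is the group of $n\times n$ monomial matrices with nonzero entries in $\mu_{de}$ whose product is a $d$-th root of unity; $\Gamma(de,e,n)$ is $\Gamma$ for it. Its hyperplanes are $z_i=\zeta z_j$ ($i<j$, $\zeta\in\mu_{de}$) and $z_i=0$. $\tilde K_n(de)$ is the multigraph on $\{1,\dots,n\}$ with $de$ edges between each pair $i<j$, labelled by $\mu_{de}$, and one unlabelled loop at each vertex; a $de$-multigraph with loops on $n$ vertices is a subgraph of $\tilde K_n(de)$ (subset of edges and loops). The edge $(i,j,\zeta)$ corresponds to $d\log(z_i-\zeta z_j)$, the loop at $i$ to $d\log(z_i)$, and $\Delta$ to the wedge product $\omega_\Delta$ of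 these forms, edges first in lexicographic order of $(i,j,\zeta)$ (for a fixed order of $\mu_{de}$), then loops. $W$ acts on such multigraphs through its action on hyperplanes. $\mathrm{Stab}_W(\Delta)$ is the subgroup of $W$ preserving $\Delta$; $\Delta$ is invariant if every element of $\mathrm{Stab}_W(\Delta)$ induces an even permutation of the set of edges and loops of $\Delta$. *)

theory Defs
  imports Complex_Main "HOL-Combinatorics.Permutations"
begin

text \<open>Hyperplanes of G(de,e,n), i.e. edges and loops of the complete multigraph
  with loops on vertices 1..n.  E i j k (i<j, k<de) is the hyperplane z_i = zeta^k z_j
  (zeta = exp(2 pi i/(de))), i.e. the edge (i,j,zeta^k); L i is z_i = 0, the loop at i.\<close>

datatype hyp = E nat nat nat | L nat

definition root :: "nat \<Rightarrow> nat \<Rightarrow> complex" where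
  "root m k = cis (2 * pi * real k / real m)"

text \<open>The ambient space C^n, as functions supported on 1..n.\<close>
definition cvec :: "nat \<Rightarrow> (nat \<Rightarrow> complex) set" where
  "cvec n = {z. \<forall>i. i \<notin> {1..n} \<longrightarrow> z i = 0}"

fun hypset :: "nat \<Rightarrow> nat \<Rightarrow> hyp \<Rightarrow> (nat \<Rightarrow> complex) set" where
  "hypset n m (E i j k) = {z \<in> cvec n. z i = root m k * z j}"
| "hypset n m (L i) = {z \<in> cvec n. z i = 0}"

definition hyps :: "nat \<Rightarrow> nat \<Rightarrow> hyp set" where
  "hyps n m = {E i j k | i j k. 1 \<le> i \<and> i < j \<and> j \<le> n \<and> k < m} \<union> {L i | i. 1 \<le> i \<and> i \<le> n}"

definition mv :: "nat \<Rightarrow> (nat \<Rightarrow> nat \<Rightarrow> complex) \<Rightarrow> (nat \<Rightarrow> complex) \<Rightarrow> (nat \<Rightarrow> complex)" where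
  "mv n M z = (\<lambda>i. if i \<in> {1..n} then (\<Sum>j\<in>{1..n}. M i j * z j) else 0)"

text \<open>G(de,e,n): monomial n x n matrices with nonzero entries in mu_{de}
  whose product of nonzero entries is a d-th root of unity.\<close>
definition Gde :: "nat \<Rightarrow> nat \<Rightarrow> nat \<Rightarrow> (nat \<Rightarrow> nat \<Rightarrow> complex) set" where
  "Gde d e n = {M.
      (\<forall>i j. M i j \<noteq> 0 \<longrightarrow> i \<in> {1..n} \<and> j \<in> {1..n})
    \<and> (\<forall>i\<in>{1..n}. \<exists>!j. j \<in> {1..n} \<and> M i j \<noteq> 0)
    \<and> (\<forall>j\<in>{1..n}. \<exists>!i. i \<in> {1..n} \<and> M i j \<noteq> 0)
    \<and> (\<forall>i j. M i j \<noteq> 0 \<longrightarrow> M i j ^ (d * e) = 1)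
    \<and> (\<Prod>i\<in>{1..n}. \<Prod>j\<in>{1..n}. (if M i j = 0 then 1 else M i j)) ^ d = 1}"

definition hact :: "nat \<Rightarrow> nat \<Rightarrow> (nat \<Rightarrow> nat \<Rightarrow> complex) \<Rightarrow> hyp \<Rightarrow> hyp" where
  "hact n m M h = (THE h'. h' \<in> hyps n m \<and> hypset n m h' = mv n M ` hypset n m h)"

fun hless :: "hyp \<Rightarrow> hyp \<Rightarrow> bool" where
  "hless (E i j k) (E i' j' k') = (i < i' \<or> (i = i' \<and> (j < j' \<or> (j = j' \<and> k < k'))))"
| "hless (E _ _ _) (L _) = True"
| "hless (L _) (E _ _ _) = False"
| "hless (L i) (L i') = (i < i')"

text \<open>Sign with which w maps omega_S to omega_{w(S)}: w(omega_S) is the wedge of the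
  images in the order of S; reordering gives (-1)^(number of inversions).\<close>
definition wsign :: "nat \<Rightarrow> nat \<Rightarrow> (nat \<Rightarrow> nat \<Rightarrow> complex) \<Rightarrow> hyp set \<Rightarrow> rat" where
  "wsign n m M S = (-1) ^ card {(h, h'). h \<in> S \<and> h' \<in> S \<and> hless h h'
                                      \<and> hless (hact n m M h') (hact n m M h)}"

text \<open>The exterior algebra Lambda(Q A), elements written in coordinates with respect to the
  basis omega_S (S a subset of A, wedge in the fixed order).\<close>
definition ext_alg :: "nat \<Rightarrow> nat \<Rightarrow> (hyp set \<Rightarrow> rat) set" where
  "ext_alg n m = {x. \<forall>T. x T \<noteq> 0 \<longrightarrow> T \<subseteq> hyps n m}"

definition omega :: "hyp set \<Rightarrow> (hyp set \<Rightarrow> rat)" where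
  "omega D = (\<lambda>T. if T = D then 1 else 0)"

definition wact :: "nat \<Rightarrow> nat \<Rightarrow> (nat \<Rightarrow> nat \<Rightarrow> complex) \<Rightarrow> (hyp set \<Rightarrow> rat) \<Rightarrow> (hyp set \<Rightarrow> rat)" where
  "wact n m M x = (\<lambda>T. \<Sum>S\<in>{S. S \<subseteq> hyps n m \<and> hact n m M ` S = T}. wsign n m M S * x S)"

definition invariants :: "nat \<Rightarrow> nat \<Rightarrow> nat \<Rightarrow> (hyp set \<Rightarrow> rat) set" where
  "invariants d e n = {x \<in> ext_alg n (d * e). \<forall>M\<in>Gde d e n. wact n (d * e) M x = x}"

definition stab :: "nat \<Rightarrow> nat \<Rightarrow> nat \<Rightarrow> hyp set \<Rightarrow> (nat \<Rightarrow> nat \<Rightarrow> complex) set" where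
  "stab d e n D = {M \<in> Gde d e n. hact n (d * e) M ` D = D}"

definition invariant_graph :: "nat \<Rightarrow> nat \<Rightarrow> nat \<Rightarrow> hyp set \<Rightarrow> bool" where
  "invariant_graph d e n D \<longleftrightarrow> D \<subseteq> hyps n (d * e) \<and>
     (\<forall>M\<in>stab d e n D. evenperm (\<lambda>h. if h \<in> D then hact n (d * e) M h else h))"

definition graph_orbits :: "nat \<Rightarrow> nat \<Rightarrow> nat \<Rightarrow> hyp set set set" where
  "graph_orbits d e n = {{hact n (d * e) M ` D | M. M \<in> Gde d e n} | D. invariant_graph d e n D}"

definition orbsum :: "nat \<Rightarrow> nat \<Rightarrow> nat \<Rightarrow> hyp set \<Rightarrow> (hyp set \<Rightarrow> rat)" where
  "orbsum d e n D = (\<lambda>T. \<Sum>M\<in>Gde d e n. wact n (d * e) M (omega D) T)"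

end

theory Submission
  imports Defs "HOL-Library.FuncSet"
begin


lemma hless_irrefl[simp]: "\<not> hless x x" by (cases x) auto
lemma hless_trans: "hless x y \<Longrightarrow> hless y z \<Longrightarrow> hless x z"
  by (cases x; cases y; cases z) auto
lemma hless_total: "x \<noteq> y \<Longrightarrow> hless x y \<or> hless y x"
  by (cases x; cases y) auto
lemma hless_asym: "hless x y \<Longrightarrow> \<not> hless y x"
  by (cases x; cases y) auto

definition invs :: "(hyp \<Rightarrow> hyp) \<Rightarrow> hyp set \<Rightarrow> (hyp \<times> hyp) set" where
  "invs f S = {(h, h'). h \<in> S \<and> h' \<in> S \<and> hless h h' \<and> hless (f h') (f h)}"
definition sg :: "(hyp \<Rightarrow> hyp) \<Rightarrow> hyp set \<Rightarrow> rat" where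
  "sg f S = (-1) ^ card (invs f S)"
definition prs :: "hyp set \<Rightarrow> (hyp \<times> hyp) set" where
  "prs S = {(x, y). x \<in> S \<and> y \<in> S \<and> hless x y}"
definition osg :: "hyp \<Rightarrow> hyp \<Rightarrow> rat" where
  "osg u v = (if hless u v then 1 else -1)"

lemma wsign_sg: "wsign n m M S = sg (hact n m M) S"
  unfolding wsign_def sg_def invs_def by simp

lemma sg_cong: "(\<And>x. x \<in> S \<Longrightarrow> f x = g x) \<Longrightarrow> sg f S = sg g S"
  unfolding sg_def invs_def by (rule arg_cong[where f="\<lambda>A. (-1) ^ card A"]) auto

lemma finite_prs: "finite S \<Longrightarrow> finite (prs S)"
  by (rule finite_subset[of _ "S \<times> S"]) (auto simp: prs_def)

lemma sg_prod:
  assumes "finite S" "inj_on f S"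
  shows "sg f S = (\<Prod>p\<in>prs S. osg (f (fst p)) (f (snd p)))"
proof -
  have "(\<Prod>p\<in>prs S. osg (f (fst p)) (f (snd p))) = (\<Prod>p\<in>prs S. if p \<in> invs f S then -1 else 1)"
  proof (rule prod.cong[OF refl])
    fix p assume p: "p \<in> prs S"
    then obtain x y where xy: "p = (x, y)" "x \<in> S" "y \<in> S" "hless x y" by (auto simp: prs_def)
    then have "f x \<noteq> f y" using assms(2) by (metis hless_irrefl inj_onD)
    then show "osg (f (fst p)) (f (snd p)) = (if p \<in> invs f S then -1 else 1)"
      using xy hless_total[of "f x" "f y"] hless_asym[of "f x" "f y"]
      by (auto simp: osg_def invs_def)
  qed
  also have "\<dots> = (-1) ^ card (prs S \<inter> invs f S)"
    using prod.If_cases[OF finite_prs[OF assms(1)], of "\<lambda>p. p \<in> invs f S" "\<lambda>_. -1::rat" "\<lambda>_. 1"]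
    by simp
  also have "prs S \<inter> invs f S = invs f S" by (auto simp: prs_def invs_def)
  finally show ?thesis by (simp add: sg_def)
qed

definition srt :: "hyp \<times> hyp \<Rightarrow> hyp \<times> hyp" where
  "srt q = (if hless (fst q) (snd q) then q else (snd q, fst q))"

lemma bij_srt:
  assumes "inj_on G S"
  shows "bij_betw (\<lambda>p. srt (G (fst p), G (snd p))) (prs S) (prs (G ` S))"
  unfolding bij_betw_def
proof
  show "inj_on (\<lambda>p. srt (G (fst p), G (snd p))) (prs S)"
  proof (rule inj_onI)
    fix p q assume p: "p \<in> prs S" and q: "q \<in> prs S"
      and e: "srt (G (fst p), G (snd p)) = srt (G (fst q), G (snd q))"
    obtain x y where xy: "p = (x, y)" "x \<in> S" "y \<in> S" "hless x y" using p by (auto simp: prs_def)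
    obtain x' y' where xy': "q = (x', y')" "x' \<in> S" "y' \<in> S" "hless x' y'" using q by (auto simp: prs_def)
    have "{G x, G y} = {G x', G y'}" using e xy xy' by (auto simp: srt_def split: if_splits)
    then have "{x, y} = {x', y'}"
      using assms xy xy' by (smt (verit, ccfv_threshold) doubleton_eq_iff inj_on_def)
    then show "p = q" using xy xy' hless_asym by (auto simp: doubleton_eq_iff)
  qed
  show "(\<lambda>p. srt (G (fst p), G (snd p))) ` prs S = prs (G ` S)"
  proof
    show "(\<lambda>p. srt (G (fst p), G (snd p))) ` prs S \<subseteq> prs (G ` S)"
    proof
      fix r assume "r \<in> (\<lambda>p. srt (G (fst p), G (snd p))) ` prs S"
      then obtain x y where xy: "r = srt (G x, G y)" "x \<in> S" "y \<in> S" "hless x y"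
        by (auto simp: prs_def)
      then have "G x \<noteq> G y" using assms by (metis hless_irrefl inj_onD)
      then show "r \<in> prs (G ` S)" using xy hless_total[of "G x" "G y"]
        by (auto simp: prs_def srt_def)
    qed
    show "prs (G ` S) \<subseteq> (\<lambda>p. srt (G (fst p), G (snd p))) ` prs S"
    proof
      fix r assume "r \<in> prs (G ` S)"
      then obtain x y where xy: "r = (G x, G y)" "x \<in> S" "y \<in> S" "hless (G x) (G y)"
        by (auto simp: prs_def)
      then have "x \<noteq> y" by auto
      then consider "hless x y" | "hless y x" using hless_total by blast
      then show "r \<in> (\<lambda>p. srt (G (fst p), G (snd p))) ` prs S"
      proof cases
        case 1
        then have "(x, y) \<in> prs S" using xy by (auto simp: prs_def)
        moreover have "r = srt (G x, G y)" using xy by (simp add: srt_def)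
        ultimately show ?thesis by force
      next
        case 2
        then have "(y, x) \<in> prs S" using xy by (auto simp: prs_def)
        moreover have "r = srt (G y, G x)" using xy hless_asym by (auto simp: srt_def)
        ultimately show ?thesis by force
      qed
    qed
  qed
qed

lemma osg_sq: "osg u v * osg u v = 1" by (simp add: osg_def)

lemma sg_comp:
  assumes S: "finite S" and G: "inj_on G S" and F: "inj_on F (G ` S)"
  shows "sg (F \<circ> G) S = sg G S * sg F (G ` S)"
proof -
  define \<tau> where "\<tau> u v = osg u v * osg (F u) (F v)" for u v
  have FG: "inj_on (F \<circ> G) S" using F G by (simp add: comp_inj_on)
  have "sg (F \<circ> G) S = (\<Prod>p\<in>prs S. osg (G (fst p)) (G (snd p)) * \<tau> (G (fst p)) (G (snd p)))"
    unfolding sg_prod[OF S FG]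
    by (rule prod.cong[OF refl]) (simp add: \<tau>_def osg_def)
  also have "\<dots> = sg G S * (\<Prod>p\<in>prs S. \<tau> (G (fst p)) (G (snd p)))"
    by (simp add: prod.distrib sg_prod[OF S G])
  also have "(\<Prod>p\<in>prs S. \<tau> (G (fst p)) (G (snd p))) = (\<Prod>p\<in>prs S. (case_prod \<tau>) (srt (G (fst p), G (snd p))))"
  proof (rule prod.cong[OF refl])
    fix p assume p: "p \<in> prs S"
    then obtain x y where xy: "p = (x, y)" "x \<in> S" "y \<in> S" "hless x y" by (auto simp: prs_def)
    then have ne: "G x \<noteq> G y" using G by (metis hless_irrefl inj_onD)
    then have ne2: "F (G x) \<noteq> F (G y)" using F xy by (meson image_eqI inj_onD)
    show "\<tau> (G (fst p)) (G (snd p)) = (case_prod \<tau>) (srt (G (fst p), G (snd p)))"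
      using xy ne ne2 hless_total[of "G x" "G y"] hless_total[of "F (G x)" "F (G y)"]
        hless_asym[of "G x" "G y"] hless_asym[of "F (G x)" "F (G y)"]
      by (auto simp: srt_def \<tau>_def osg_def)
  qed
  also have "\<dots> = (\<Prod>q\<in>prs (G ` S). (case_prod \<tau>) q)"
    by (rule prod.reindex_bij_betw[OF bij_srt[OF G]])
  also have "\<dots> = (\<Prod>q\<in>prs (G ` S). osg (F (fst q)) (F (snd q)))"
    by (rule prod.cong[OF refl]) (auto simp: prs_def \<tau>_def osg_def)
  also have "\<dots> = sg F (G ` S)"
    using sg_prod[OF finite_imageI[OF S] F] by simp
  finally show ?thesis .
qed

lemma invs_transpose:
  assumes "a \<in> S" "b \<in> S" "hless a b"
  shows "invs (Transposition.transpose a b) S =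
     {(a, b)} \<union> (\<lambda>c. (a, c)) ` {c \<in> S. hless a c \<and> hless c b} \<union> (\<lambda>c. (c, b)) ` {c \<in> S. hless a c \<and> hless c b}"
  (is "?L = ?R")
proof
  show "?L \<subseteq> ?R"
  proof
    fix p assume "p \<in> ?L"
    then obtain x y where p: "p = (x, y)" "x \<in> S" "y \<in> S" "hless x y"
      "hless (Transposition.transpose a b y) (Transposition.transpose a b x)"
      by (auto simp: invs_def)
    have ab: "a \<noteq> b" using assms by auto
    show "p \<in> ?R"
    proof (cases "x = a")
      case True
      then show ?thesis using p ab
        by (cases "y = b") (auto simp: transpose_def split: if_splits)
    next
      case xa: False
      show ?thesis
      proof (cases "x = b")
        case True
        then show ?thesis using p ab xa assms(3)
          by (auto simp: transpose_def split: if_splits dest: hless_asym hless_trans)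
      next
        case False
        then show ?thesis using p ab xa assms(3)
          by (auto simp: transpose_def split: if_splits dest: hless_asym hless_trans)
      qed
    qed
  qed
  show "?R \<subseteq> ?L"
    using assms by (auto simp: invs_def transpose_def dest: hless_asym)
qed

lemma sg_transpose:
  assumes "a \<in> S" "b \<in> S" "a \<noteq> b" "finite S"
  shows "sg (Transposition.transpose a b) S = -1"
proof -
  have main: "sg (Transposition.transpose a b) S = -1" if "a \<in> S" "b \<in> S" "hless a b" for a b
  proof -
    define C where "C = {c \<in> S. hless a c \<and> hless c b}"
    have fC: "finite C" using assms(4) by (simp add: C_def)
    have d1: "{(a, b)} \<inter> ((\<lambda>c. (a, c)) ` C \<union> (\<lambda>c. (c, b)) ` C) = {}"
      by (auto simp: C_def)
    have d2: "(\<lambda>c. (a, c)) ` C \<inter> (\<lambda>c. (c, b)) ` C = {}"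
      using that by (auto simp: C_def dest: hless_asym)
    have "card (invs (Transposition.transpose a b) S) = card ({(a, b)} \<union> ((\<lambda>c. (a, c)) ` C \<union> (\<lambda>c. (c, b)) ` C))"
      using invs_transpose[OF that] by (simp add: C_def Un_assoc)
    also have "\<dots> = 1 + (card C + card C)"
      using d1 d2 fC by (simp add: card_Un_disjoint card_image inj_on_def)
    finally show ?thesis by (simp add: sg_def)
  qed
  show ?thesis
  proof (cases "hless a b")
    case True then show ?thesis using main assms by blast
  next
    case False
    then have "hless b a" using hless_total assms by blast
    then show ?thesis using main[of b a] assms by (simp add: transpose_commute)
  qed
qed

lemma sg_permutes:
  assumes "p permutes S" "finite S"
  shows "sg p S = of_int (sign p)"
  using assms
proof (induction p rule: permutes_induct)
  case id
  have "invs id S = {}" by (auto simp: invs_def dest: hless_asym)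
  then show ?case by (simp add: sg_def id_def)
next
  case (swap a b p)
  have ip: "inj_on p S" using swap.hyps(4) by (meson permutes_inj_on)
  have pS: "p ` S = S" using swap.hyps(4) by (rule permutes_image)
  have "sg (Transposition.transpose a b \<circ> p) S = sg p S * sg (Transposition.transpose a b) (p ` S)"
    by (rule sg_comp[OF assms(2) ip]) (meson inj_on_subset inj_transpose subset_UNIV)
  also have "\<dots> = - sg p S" using sg_transpose[OF swap.hyps(1,2,3) assms(2)] pS by simp
  also have "sign (Transposition.transpose a b \<circ> p) = - sign p"
  proof -
    have "permutation p" using swap.hyps(4) assms(2) permutation_permutes by blast
    then show ?thesis using swap.hyps(3)
      by (simp add: sign_compose permutation_swap_id sign_swap_id)
  qed
  ultimately show ?case using swap.IH by (simp add: o_def)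
qed




abbreviation "R n \<equiv> {1..n::nat}"

definition monm :: "nat \<Rightarrow> (nat \<Rightarrow> nat) \<Rightarrow> (nat \<Rightarrow> complex) \<Rightarrow> nat \<Rightarrow> nat \<Rightarrow> complex" where
  "monm n s a = (\<lambda>i j. if i \<in> R n \<and> j \<in> R n \<and> i = s j then a j else 0)"

definition mmul :: "nat \<Rightarrow> (nat \<Rightarrow> nat \<Rightarrow> complex) \<Rightarrow> (nat \<Rightarrow> nat \<Rightarrow> complex) \<Rightarrow> nat \<Rightarrow> nat \<Rightarrow> complex" where
  "mmul n A B = (\<lambda>i k. \<Sum>j\<in>R n. A i j * B j k)"

lemma root_unity: "0 < m \<Longrightarrow> root m k ^ m = 1"
proof -
  assume m: "0 < m"
  have e: "real m * (2 * pi * real k / real m) = 2 * pi * real k" using m by simp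
  have "root m k ^ m = cis (2 * pi * real k)"
    unfolding root_def DeMoivre e ..
  also have "\<dots> = 1" by (rule cis_multiple_2pi) simp
  finally show ?thesis .
qed

lemma root_nz[simp]: "root m k \<noteq> 0" by (simp add: root_def)

lemma root_surj: "0 < m \<Longrightarrow> c ^ m = 1 \<Longrightarrow> \<exists>k<m. root m k = c"
proof -
  assume m: "0 < m" and c: "c ^ m = 1"
  have "c \<in> (\<lambda>k. cis (2 * pi * real k / real m)) ` {..<m}"
    using bij_betw_roots_unity[OF m] c unfolding bij_betw_def by blast
  then show ?thesis unfolding root_def by auto
qed

lemma root_inj: "0 < m \<Longrightarrow> k < m \<Longrightarrow> k' < m \<Longrightarrow> root m k = root m k' \<Longrightarrow> k = k'"
proof -
  assume m: "0 < m" and "k < m" "k' < m" "root m k = root m k'"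
  moreover have "inj_on (\<lambda>k. cis (2 * pi * real k / real m)) {..<m}"
    using bij_betw_roots_unity[OF m] unfolding bij_betw_def by blast
  ultimately show ?thesis unfolding root_def inj_on_def by blast
qed

lemma unity_nz: "0 < (m::nat) \<Longrightarrow> (c::complex) ^ m = 1 \<Longrightarrow> c \<noteq> 0"
  by (cases m) auto

lemma mv_cvec[simp]: "mv n M z \<in> cvec n"
  by (auto simp: mv_def cvec_def)

lemma mv_mmul: "mv n (mmul n A B) z = mv n A (mv n B z)"
proof
  fix i
  show "mv n (mmul n A B) z i = mv n A (mv n B z) i"
  proof (cases "i \<in> R n")
    case True
    have "mv n (mmul n A B) z i = (\<Sum>k\<in>R n. \<Sum>j\<in>R n. A i j * B j k * z k)"
      using True by (simp add: mv_def mmul_def sum_distrib_right)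
    also have "\<dots> = (\<Sum>j\<in>R n. \<Sum>k\<in>R n. A i j * B j k * z k)" by (rule sum.swap)
    also have "\<dots> = mv n A (mv n B z) i"
      using True by (simp add: mv_def sum_distrib_left mult.assoc)
    finally show ?thesis .
  next
    case False
    then show ?thesis unfolding mv_def by auto
  qed
qed

lemma mv_monm:
  assumes s: "s permutes R n"
  shows "mv n (monm n s a) z = (\<lambda>i. if i \<in> R n then a (inv s i) * z (inv s i) else 0)"
proof
  fix i
  show "mv n (monm n s a) z i = (if i \<in> R n then a (inv s i) * z (inv s i) else 0)"
  proof (cases "i \<in> R n")
    case True
    have "mv n (monm n s a) z i = (\<Sum>j\<in>R n. (if i \<in> R n \<and> j \<in> R n \<and> i = s j then a j else 0) * z j)"
      using True by (simp add: mv_def monm_def)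
    also have "\<dots> = (\<Sum>j\<in>R n. if j = inv s i then a j * z j else 0)"
    proof (rule sum.cong[OF refl])
      fix j assume j: "j \<in> R n"
      have "(i = s j) = (j = inv s i)" using permutes_inv_eq[OF s, of i j] by metis
      then show "(if i \<in> R n \<and> j \<in> R n \<and> i = s j then a j else 0) * z j = (if j = inv s i then a j * z j else 0)"
        using True j by auto
    qed
    also have "\<dots> = a (inv s i) * z (inv s i)"
      using True permutes_in_image[OF permutes_inv[OF s], of i] by simp
    finally show ?thesis using True by simp
  next
    case False
    then show ?thesis unfolding mv_def by auto
  qed
qed

definition unmv :: "nat \<Rightarrow> (nat \<Rightarrow> nat) \<Rightarrow> (nat \<Rightarrow> complex) \<Rightarrow> (nat \<Rightarrow> complex) \<Rightarrow> nat \<Rightarrow> complex" where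
  "unmv n s a y = (\<lambda>j. if j \<in> R n then y (s j) / a j else 0)"

lemma unmv_mv:
  assumes s: "s permutes R n" and a: "\<forall>j\<in>R n. a j \<noteq> 0" and z: "z \<in> cvec n"
  shows "unmv n s a (mv n (monm n s a) z) = z"
proof
  fix j
  show "unmv n s a (mv n (monm n s a) z) j = z j"
  proof (cases "j \<in> R n")
    case True
    then have sj: "s j \<in> R n" using permutes_in_image[OF s] by blast
    have "mv n (monm n s a) z (s j) = a j * z j"
      using sj by (simp add: mv_monm[OF s] permutes_inverses[OF s])
    then show ?thesis using True a by (simp add: unmv_def)
  next
    case False
    then show ?thesis using z by (auto simp: unmv_def cvec_def)
  qed
qed

lemma mv_unmv:
  assumes s: "s permutes R n" and a: "\<forall>j\<in>R n. a j \<noteq> 0" and y: "y \<in> cvec n"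
  shows "mv n (monm n s a) (unmv n s a y) = y"
proof
  fix i
  show "mv n (monm n s a) (unmv n s a y) i = y i"
  proof (cases "i \<in> R n")
    case True
    then have si: "inv s i \<in> R n" using permutes_in_image[OF permutes_inv[OF s]] by blast
    have "unmv n s a y (inv s i) = y i / a (inv s i)"
      using si by (simp add: unmv_def permutes_inverses[OF s])
    then show ?thesis using True a si by (simp add: mv_monm[OF s])
  next
    case False
    then show ?thesis using y by (auto simp: mv_monm[OF s] cvec_def)
  qed
qed

lemma unmv_cvec: "unmv n s a y \<in> cvec n" by (auto simp: unmv_def cvec_def)

lemma mv_image:
  assumes s: "s permutes R n" and a: "\<forall>j\<in>R n. a j \<noteq> 0" and H: "H \<subseteq> cvec n"
  shows "mv n (monm n s a) ` H = {y \<in> cvec n. unmv n s a y \<in> H}"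
proof
  show "mv n (monm n s a) ` H \<subseteq> {y \<in> cvec n. unmv n s a y \<in> H}"
    using unmv_mv[OF s a] H by auto
  show "{y \<in> cvec n. unmv n s a y \<in> H} \<subseteq> mv n (monm n s a) ` H"
  proof
    fix y assume "y \<in> {y \<in> cvec n. unmv n s a y \<in> H}"
    then show "y \<in> mv n (monm n s a) ` H" using mv_unmv[OF s a, of y] by (metis (mono_tags) image_eqI mem_Collect_eq)
  qed
qed

lemma mv_inj:
  assumes s: "s permutes R n" and a: "\<forall>j\<in>R n. a j \<noteq> 0"
  shows "inj_on (mv n (monm n s a)) (cvec n)"
proof (rule inj_onI)
  fix x y assume x: "x \<in> cvec n" and y: "y \<in> cvec n" and e: "mv n (monm n s a) x = mv n (monm n s a) y"
  have "x = unmv n s a (mv n (monm n s a) x)" using unmv_mv[OF s a x] by simp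
  also have "\<dots> = y" using e unmv_mv[OF s a y] by simp
  finally show "x = y" .
qed

lemma hypset_cvec: "hypset n m h \<subseteq> cvec n" by (cases h) auto

lemma hact_ex:
  assumes m: "0 < m" and s: "s permutes R n" and a: "\<forall>j\<in>R n. a j ^ m = 1" and h: "h \<in> hyps n m"
  shows "\<exists>h'\<in>hyps n m. hypset n m h' = mv n (monm n s a) ` hypset n m h"
proof -
  have anz: "\<forall>j\<in>R n. a j \<noteq> 0" using a unity_nz[OF m] by blast
  note img = mv_image[OF s anz hypset_cvec]
  have sR: "\<And>j. j \<in> R n \<Longrightarrow> s j \<in> R n" using permutes_in_image[OF s] by blast
  show ?thesis
  proof (cases h)
    case (E i j k)
    with h have ij: "1 \<le> i" "i < j" "j \<le> n" "k < m" by (auto simp: hyps_def)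
    then have iR: "i \<in> R n" and jR: "j \<in> R n" by auto
    define c where "c = root m k * a i / a j"
    have c1: "c ^ m = 1" using a iR jR root_unity[OF m, of k]
      by (simp add: c_def power_mult_distrib power_divide)
    have cnz: "c \<noteq> 0" using unity_nz[OF m c1] .
    have "mv n (monm n s a) ` hypset n m h = {y \<in> cvec n. y (s i) = c * y (s j)}"
      unfolding img E using iR jR anz
      by (auto simp: unmv_def cvec_def c_def field_simps)
    moreover have "s i \<noteq> s j" using ij s by (metis iR jR less_irrefl permutes_inj_on inj_onD)
    moreover have "{y \<in> cvec n. y (s i) = c * y (s j)} = {y \<in> cvec n. y (s j) = inverse c * y (s i)}"
      using cnz by (auto simp: field_simps)
    ultimately consider "s i < s j" "mv n (monm n s a) ` hypset n m h = {y \<in> cvec n. y (s i) = c * y (s j)}"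
      | "s j < s i" "mv n (monm n s a) ` hypset n m h = {y \<in> cvec n. y (s j) = inverse c * y (s i)}"
      by (metis linorder_neqE_nat)
    then show ?thesis
    proof cases
      case 1
      obtain k' where k': "k' < m" "root m k' = c" using root_surj[OF m c1] by blast
      have "E (s i) (s j) k' \<in> hyps n m" using 1 k' sR[OF iR] sR[OF jR] by (auto simp: hyps_def)
      then show ?thesis using 1 k' by (intro bexI[of _ "E (s i) (s j) k'"]) auto
    next
      case 2
      have c2: "(inverse c) ^ m = 1" using c1 by (simp add: power_inverse)
      obtain k' where k': "k' < m" "root m k' = inverse c" using root_surj[OF m c2] by blast
      have "E (s j) (s i) k' \<in> hyps n m" using 2 k' sR[OF iR] sR[OF jR] by (auto simp: hyps_def)
      then show ?thesis using 2 k' by (intro bexI[of _ "E (s j) (s i) k'"]) auto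
    qed
  next
    case (L i)
    with h have iR: "i \<in> R n" by (auto simp: hyps_def)
    have "mv n (monm n s a) ` hypset n m h = {y \<in> cvec n. y (s i) = 0}"
      unfolding img L using iR anz by (auto simp: unmv_def cvec_def)
    moreover have "L (s i) \<in> hyps n m" using sR[OF iR] by (auto simp: hyps_def)
    ultimately show ?thesis by (intro bexI[of _ "L (s i)"]) auto
  qed
qed

definition ev :: "nat \<Rightarrow> nat \<Rightarrow> complex" where "ev p = (\<lambda>q. if q = p then 1 else 0)"

lemma ev_cvec: "p \<in> R n \<Longrightarrow> ev p \<in> cvec n" by (auto simp: ev_def cvec_def)

lemma ev_E: "p \<in> R n \<Longrightarrow> i \<noteq> j \<Longrightarrow> ev p \<in> hypset n m (E i j k) \<longleftrightarrow> p \<noteq> i \<and> p \<noteq> j"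
  by (auto simp: ev_def cvec_def)

lemma ev_L: "p \<in> R n \<Longrightarrow> ev p \<in> hypset n m (L i) \<longleftrightarrow> p \<noteq> i"
  by (auto simp: ev_def cvec_def)

lemma hypset_inj:
  assumes m: "0 < m" and h1: "h1 \<in> hyps n m" and h2: "h2 \<in> hyps n m"
    and eq: "hypset n m h1 = hypset n m h2"
  shows "h1 = h2"
proof (cases h1)
  case (E i j k)
  with h1 have ij: "1 \<le> i" "i < j" "j \<le> n" "k < m" by (auto simp: hyps_def)
  show ?thesis
  proof (cases h2)
    case (E i' j' k')
    with h2 have ij': "1 \<le> i'" "i' < j'" "j' \<le> n" "k' < m" by (auto simp: hyps_def)
    have "\<forall>p\<in>R n. (p \<noteq> i \<and> p \<noteq> j) = (p \<noteq> i' \<and> p \<noteq> j')"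
      using eq ev_E \<open>h1 = E i j k\<close> E ij ij' by (metis less_irrefl)
    then have "{i, j} = {i', j'}" using ij ij' by (simp add: set_eq_iff) (metis atLeastAtMost_iff le_trans less_imp_le)
    then have ii: "i = i'" "j = j'" using ij ij' by (auto simp: doubleton_eq_iff)
    define w where "w = (\<lambda>q. if q = i then root m k else if q = j then 1 else (0::complex))"
    have "w \<in> hypset n m h1" using ij \<open>h1 = E i j k\<close> by (auto simp: w_def cvec_def)
    then have "w \<in> hypset n m h2" using eq by simp
    then have "root m k = root m k'" using E ii ij by (auto simp: w_def)
    then show ?thesis using root_inj[OF m ij(4) ij'(4)] ii \<open>h1 = E i j k\<close> E by simp
  next
    case (L i')
    with h2 have "i' \<in> R n" by (auto simp: hyps_def)
    have "i \<in> R n" "j \<in> R n" using ij by auto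
    then have "i = i'" "j = i'" using eq ev_E[of _ n i j m k] ev_L[of _ n m i'] \<open>h1 = E i j k\<close> L ij
      by (metis less_irrefl)+
    then show ?thesis using ij by simp
  qed
next
  case (L i)
  with h1 have iR: "i \<in> R n" by (auto simp: hyps_def)
  show ?thesis
  proof (cases h2)
    case (E i' j' k')
    with h2 have ij': "1 \<le> i'" "i' < j'" "j' \<le> n" "k' < m" by (auto simp: hyps_def)
    have "i' \<in> R n" "j' \<in> R n" using ij' by auto
    then have "i' = i" "j' = i" using eq ev_E[of _ n i' j' m k'] ev_L[of _ n m i] \<open>h1 = L i\<close> E ij'
      by (metis less_irrefl)+
    then show ?thesis using ij' by simp
  next
    case (L i')
    then show ?thesis using eq ev_L[of i n m] ev_L[of i n m i'] iR \<open>h1 = L i\<close> by auto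
  qed
qed




lemma monm_prod:
  assumes s: "s permutes R n" and a: "\<forall>j\<in>R n. a j \<noteq> 0"
  shows "(\<Prod>i\<in>R n. \<Prod>j\<in>R n. (if monm n s a i j = 0 then 1 else monm n s a i j)) = (\<Prod>j\<in>R n. a j)"
proof -
  have "(\<Prod>i\<in>R n. \<Prod>j\<in>R n. (if monm n s a i j = 0 then 1 else monm n s a i j))
      = (\<Prod>i\<in>R n. \<Prod>j\<in>R n. (if i = s j then a j else 1))"
    by (rule prod.cong[OF refl], rule prod.cong[OF refl]) (use a in \<open>auto simp: monm_def\<close>)
  also have "\<dots> = (\<Prod>j\<in>R n. \<Prod>i\<in>R n. (if i = s j then a j else 1))" by (rule prod.swap)
  also have "\<dots> = (\<Prod>j\<in>R n. a j)"
    by (rule prod.cong[OF refl]) (use permutes_in_image[OF s] in auto)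
  finally show ?thesis .
qed

lemma monm_Gde:
  assumes m: "0 < d * e" and s: "s permutes R n" and a: "\<forall>j\<in>R n. a j ^ (d * e) = 1"
    and p: "(\<Prod>j\<in>R n. a j) ^ d = 1"
  shows "monm n s a \<in> Gde d e n"
proof -
  have anz: "\<forall>j\<in>R n. a j \<noteq> 0" using a unity_nz[OF m] by blast
  have sR: "\<And>j. s j \<in> R n \<longleftrightarrow> j \<in> R n" using permutes_in_image[OF s] by blast
  have isR: "\<And>j. inv s j \<in> R n \<longleftrightarrow> j \<in> R n" using permutes_in_image[OF permutes_inv[OF s]] by blast
  have nz: "\<And>i j. monm n s a i j \<noteq> 0 \<longleftrightarrow> i \<in> R n \<and> j \<in> R n \<and> i = s j"
    using anz by (auto simp: monm_def)
  have rows: "\<forall>i\<in>R n. \<exists>!j. j \<in> R n \<and> monm n s a i j \<noteq> 0"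
  proof
    fix i assume i: "i \<in> R n"
    show "\<exists>!j. j \<in> R n \<and> monm n s a i j \<noteq> 0"
    proof (rule ex1I[of _ "inv s i"])
      show "inv s i \<in> R n \<and> monm n s a i (inv s i) \<noteq> 0"
        using i isR nz permutes_inverses[OF s] by auto
      show "\<And>j. j \<in> R n \<and> monm n s a i j \<noteq> 0 \<Longrightarrow> j = inv s i"
        using nz permutes_inverses[OF s] by auto
    qed
  qed
  have cols: "\<forall>j\<in>R n. \<exists>!i. i \<in> R n \<and> monm n s a i j \<noteq> 0"
  proof
    fix j assume j: "j \<in> R n"
    show "\<exists>!i. i \<in> R n \<and> monm n s a i j \<noteq> 0"
      by (rule ex1I[of _ "s j"]) (use j sR nz in auto)
  qed
  have ent: "\<forall>i j. monm n s a i j \<noteq> 0 \<longrightarrow> monm n s a i j ^ (d * e) = 1"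
    using a by (auto simp: monm_def)
  have sup: "\<forall>i j. monm n s a i j \<noteq> 0 \<longrightarrow> i \<in> R n \<and> j \<in> R n" using nz by blast
  show ?thesis unfolding Gde_def using rows cols ent sup p monm_prod[OF s anz] by simp
qed

lemma Gde_rep:
  assumes m: "0 < d * e" and M: "M \<in> Gde d e n"
  shows "\<exists>s a. s permutes R n \<and> (\<forall>j\<in>R n. a j ^ (d * e) = 1) \<and> (\<Prod>j\<in>R n. a j) ^ d = 1 \<and> M = monm n s a"
proof -
  note MM = M[unfolded Gde_def mem_Collect_eq]
  have sup: "\<And>i j. M i j \<noteq> 0 \<Longrightarrow> i \<in> R n \<and> j \<in> R n" using conjunct1[OF MM] by blast
  have rows: "\<And>i. i \<in> R n \<Longrightarrow> \<exists>!j. j \<in> R n \<and> M i j \<noteq> 0"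
    using conjunct1[OF conjunct2[OF MM]] by blast
  have cols: "\<And>j. j \<in> R n \<Longrightarrow> \<exists>!i. i \<in> R n \<and> M i j \<noteq> 0"
    using conjunct1[OF conjunct2[OF conjunct2[OF MM]]] by blast
  have ent: "\<And>i j. M i j \<noteq> 0 \<Longrightarrow> M i j ^ (d * e) = 1"
    using conjunct1[OF conjunct2[OF conjunct2[OF conjunct2[OF MM]]]] by blast
  have p: "(\<Prod>i\<in>R n. \<Prod>j\<in>R n. (if M i j = 0 then 1 else M i j)) ^ d = 1"
    using conjunct2[OF conjunct2[OF conjunct2[OF conjunct2[OF MM]]]] by blast
  define s where "s j = (if j \<in> R n then (THE i. i \<in> R n \<and> M i j \<noteq> 0) else j)" for j
  define a where "a j = M (s j) j" for j
  have s1: "s j \<in> R n \<and> M (s j) j \<noteq> 0" if "j \<in> R n" for j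
    using theI'[OF cols[OF that]] that by (simp add: s_def)
  have s2: "i = s j" if "M i j \<noteq> 0" for i j
  proof -
    have "i \<in> R n" "j \<in> R n" using sup[OF that] by auto
    then show ?thesis using that the1_equality[OF cols[of j], of i] by (simp add: s_def)
  qed
  have inj: "inj_on s (R n)"
  proof (rule inj_onI)
    fix j j' assume j: "j \<in> R n" and j': "j' \<in> R n" and e: "s j = s j'"
    have "M (s j) j \<noteq> 0" "M (s j) j' \<noteq> 0" using s1[OF j] s1[OF j'] e by auto
    then show "j = j'" using rows[of "s j"] s1[OF j] j j' by blast
  qed
  have "s ` R n \<subseteq> R n" using s1 by auto
  then have "s ` R n = R n" using endo_inj_surj[OF finite_atLeastAtMost _ inj] by blast
  then have bs: "bij_betw s (R n) (R n)" using inj by (simp add: bij_betw_def)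
  have sp: "s permutes R n"
    by (rule bij_imp_permutes[OF bs]) (auto simp: s_def)
  have Meq: "M = monm n s a"
  proof (intro ext)
    fix i j
    show "M i j = monm n s a i j"
    proof (cases "M i j = 0")
      case True
      then show ?thesis by (auto simp: monm_def a_def)
    next
      case False
      then show ?thesis using sup[OF False] s2[OF False] by (auto simp: monm_def a_def)
    qed
  qed
  have anz: "\<forall>j\<in>R n. a j \<noteq> 0" using s1 by (simp add: a_def)
  have ar: "\<forall>j\<in>R n. a j ^ (d * e) = 1" using s1 ent by (simp add: a_def)
  have "(\<Prod>j\<in>R n. a j) ^ d = 1" using p unfolding Meq monm_prod[OF sp anz] .
  then show ?thesis using sp ar Meq by blast
qed

lemma mmul_monm:
  assumes s: "s permutes R n" and t: "t permutes R n"
  shows "mmul n (monm n s a) (monm n t b) = monm n (s \<circ> t) (\<lambda>k. a (t k) * b k)"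
proof (intro ext)
  fix i k
  have "mmul n (monm n s a) (monm n t b) i k =
     (\<Sum>j\<in>R n. if j = t k then (if i \<in> R n \<and> k \<in> R n \<and> i = s (t k) then a (t k) * b k else 0) else 0)"
    unfolding mmul_def by (rule sum.cong[OF refl]) (auto simp: monm_def)
  also have "\<dots> = monm n (s \<circ> t) (\<lambda>k. a (t k) * b k) i k"
    using permutes_in_image[OF t, of k] by (auto simp: monm_def)
  finally show "mmul n (monm n s a) (monm n t b) i k = monm n (s \<circ> t) (\<lambda>k. a (t k) * b k) i k" .
qed

lemma monm_eq:
  assumes "monm n s a = monm n s' a'" and a: "\<forall>j\<in>R n. a j \<noteq> 0" and sR: "\<forall>j\<in>R n. s j \<in> R n"
    and j: "j \<in> R n"
  shows "s j = s' j \<and> a j = a' j"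
proof -
  have "monm n s a (s j) j = a j" using j sR by (simp add: monm_def)
  moreover have "monm n s' a' (s j) j = monm n s a (s j) j" using assms(1) by simp
  ultimately show ?thesis using a j by (auto simp: monm_def split: if_splits)
qed

lemma monm_cong:
  assumes "\<forall>j\<in>R n. s j = s' j \<and> a j = a' j"
  shows "monm n s a = monm n s' a'"
  using assms by (intro ext) (auto simp: monm_def)

lemma Gde_mmul:
  assumes m: "0 < d * e" and M: "M \<in> Gde d e n" and g: "g \<in> Gde d e n"
  shows "mmul n M g \<in> Gde d e n"
proof -
  obtain s a where sa: "s permutes R n" "\<forall>j\<in>R n. a j ^ (d * e) = 1" "(\<Prod>j\<in>R n. a j) ^ d = 1" "M = monm n s a"
    using Gde_rep[OF m M] by blast
  obtain t b where tb: "t permutes R n" "\<forall>j\<in>R n. b j ^ (d * e) = 1" "(\<Prod>j\<in>R n. b j) ^ d = 1" "g = monm n t b"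
    using Gde_rep[OF m g] by blast
  have "(\<Prod>k\<in>R n. a (t k) * b k) = (\<Prod>k\<in>R n. a (t k)) * (\<Prod>k\<in>R n. b k)" by (rule prod.distrib)
  also have "(\<Prod>k\<in>R n. a (t k)) = (\<Prod>k\<in>R n. a k)"
    using prod.permute[OF tb(1), of a] by (simp add: o_def)
  finally have pr: "(\<Prod>k\<in>R n. a (t k) * b k) ^ d = 1" using sa(3) tb(3) by (simp add: power_mult_distrib)
  have rr: "\<forall>k\<in>R n. (a (t k) * b k) ^ (d * e) = 1"
    using sa(2) tb(2) permutes_in_image[OF tb(1)] by (simp add: power_mult_distrib)
  show ?thesis
    unfolding sa(4) tb(4) mmul_monm[OF sa(1) tb(1)]
    by (rule monm_Gde[OF m permutes_compose[OF tb(1) sa(1)] rr pr])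
qed

lemma Gde_rmul_inj:
  assumes m: "0 < d * e" and g: "g \<in> Gde d e n"
  shows "inj_on (\<lambda>M. mmul n M g) (Gde d e n)"
proof (rule inj_onI)
  fix M M' assume M: "M \<in> Gde d e n" and M': "M' \<in> Gde d e n" and eq: "mmul n M g = mmul n M' g"
  obtain s a where sa: "s permutes R n" "\<forall>j\<in>R n. a j ^ (d * e) = 1" "M = monm n s a"
    using Gde_rep[OF m M] by blast
  obtain s' a' where sa': "s' permutes R n" "\<forall>j\<in>R n. a' j ^ (d * e) = 1" "M' = monm n s' a'"
    using Gde_rep[OF m M'] by blast
  obtain t b where tb: "t permutes R n" "\<forall>j\<in>R n. b j ^ (d * e) = 1" "g = monm n t b"
    using Gde_rep[OF m g] by blast
  have anz: "\<forall>j\<in>R n. a j \<noteq> 0" "\<forall>j\<in>R n. b j \<noteq> 0" using sa(2) tb(2) unity_nz[OF m] by blast+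
  have tR: "\<And>k. t k \<in> R n \<longleftrightarrow> k \<in> R n" using permutes_in_image[OF tb(1)] by blast
  have sR: "\<forall>k\<in>R n. (s \<circ> t) k \<in> R n" using permutes_in_image[OF sa(1)] tR by simp
  have e2: "monm n (s \<circ> t) (\<lambda>k. a (t k) * b k) = monm n (s' \<circ> t) (\<lambda>k. a' (t k) * b k)"
    using eq unfolding sa(3) sa'(3) tb(3) mmul_monm[OF sa(1) tb(1)] mmul_monm[OF sa'(1) tb(1)] .
  have "\<forall>j\<in>R n. s j = s' j \<and> a j = a' j"
  proof
    fix j assume j: "j \<in> R n"
    define k where "k = inv t j"
    have k: "k \<in> R n" "t k = j" using j permutes_in_image[OF permutes_inv[OF tb(1)]] permutes_inverses[OF tb(1)]
      by (auto simp: k_def)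
    have "(s \<circ> t) k = (s' \<circ> t) k \<and> a (t k) * b k = a' (t k) * b k"
      by (rule monm_eq[OF e2 _ sR k(1)]) (use anz tR in auto)
    then show "s j = s' j \<and> a j = a' j" using k anz(2) by auto
  qed
  then show "M = M'" unfolding sa(3) sa'(3) by (rule monm_cong)
qed

lemma Gde_lmul_inj:
  assumes m: "0 < d * e" and g: "g \<in> Gde d e n"
  shows "inj_on (\<lambda>M. mmul n g M) (Gde d e n)"
proof (rule inj_onI)
  fix M M' assume M: "M \<in> Gde d e n" and M': "M' \<in> Gde d e n" and eq: "mmul n g M = mmul n g M'"
  obtain s a where sa: "s permutes R n" "\<forall>j\<in>R n. a j ^ (d * e) = 1" "M = monm n s a"
    using Gde_rep[OF m M] by blast
  obtain s' a' where sa': "s' permutes R n" "\<forall>j\<in>R n. a' j ^ (d * e) = 1" "M' = monm n s' a'"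
    using Gde_rep[OF m M'] by blast
  obtain t b where tb: "t permutes R n" "\<forall>j\<in>R n. b j ^ (d * e) = 1" "g = monm n t b"
    using Gde_rep[OF m g] by blast
  have anz: "\<forall>j\<in>R n. a j \<noteq> 0" "\<forall>j\<in>R n. b j \<noteq> 0" using sa(2) tb(2) unity_nz[OF m] by blast+
  have sR: "\<And>k. s k \<in> R n \<longleftrightarrow> k \<in> R n" using permutes_in_image[OF sa(1)] by blast
  have tR: "\<forall>k\<in>R n. (t \<circ> s) k \<in> R n" using permutes_in_image[OF tb(1)] sR by simp
  have e2: "monm n (t \<circ> s) (\<lambda>k. b (s k) * a k) = monm n (t \<circ> s') (\<lambda>k. b (s' k) * a' k)"
    using eq unfolding sa(3) sa'(3) tb(3) mmul_monm[OF tb(1) sa(1)] mmul_monm[OF tb(1) sa'(1)] .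
  have "\<forall>j\<in>R n. s j = s' j \<and> a j = a' j"
  proof
    fix j assume j: "j \<in> R n"
    have "(t \<circ> s) j = (t \<circ> s') j \<and> b (s j) * a j = b (s' j) * a' j"
      by (rule monm_eq[OF e2 _ tR j]) (use anz sR in auto)
    then have "s j = s' j" "b (s j) * a j = b (s j) * a' j"
      using permutes_inj[OF tb(1)] by (auto dest: injD)
    moreover have "b (s j) \<noteq> 0" using anz(2) sR j by auto
    ultimately show "s j = s' j \<and> a j = a' j" by simp
  qed
  then show "M = M'" unfolding sa(3) sa'(3) by (rule monm_cong)
qed

lemma finite_unity: "0 < m \<Longrightarrow> finite {z::complex. z ^ m = 1}"
  using bij_betw_finite[OF bij_betw_roots_unity[of m]] by simp

lemma finite_Gde:
  assumes m: "0 < d * e"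
  shows "finite (Gde d e n)"
proof -
  define U where "U = insert 0 {z::complex. z ^ (d * e) = 1}"
  have fU: "finite U" using finite_unity[OF m] by (simp add: U_def)
  define r where "r M = (\<lambda>p\<in>R n \<times> R n. M (fst p) (snd p))" for M :: "nat \<Rightarrow> nat \<Rightarrow> complex"
  have sub: "r ` Gde d e n \<subseteq> (\<Pi>\<^sub>E p\<in>R n \<times> R n. U)"
  proof
    fix X assume "X \<in> r ` Gde d e n"
    then obtain M where M: "M \<in> Gde d e n" "X = r M" by blast
    have ent: "\<And>i j. M i j \<noteq> 0 \<Longrightarrow> M i j ^ (d * e) = 1"
      using conjunct1[OF conjunct2[OF conjunct2[OF conjunct2[OF M(1)[unfolded Gde_def mem_Collect_eq]]]]] by blast
    show "X \<in> (\<Pi>\<^sub>E p\<in>R n \<times> R n. U)" unfolding M(2) r_def restrict_PiE_iff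
    proof
      fix p assume "p \<in> R n \<times> R n"
      show "M (fst p) (snd p) \<in> U"
        using ent[of "fst p" "snd p"] by (cases "M (fst p) (snd p) = 0") (simp_all add: U_def)
    qed
  qed
  have fin: "finite (\<Pi>\<^sub>E p\<in>R n \<times> R n. U)" by (rule finite_PiE) (use fU in auto)
  have inj: "inj_on r (Gde d e n)"
  proof (rule inj_onI)
    fix M M' assume M: "M \<in> Gde d e n" and M': "M' \<in> Gde d e n" and eq: "r M = r M'"
    show "M = M'"
    proof (intro ext)
      fix i j
      show "M i j = M' i j"
      proof (cases "i \<in> R n \<and> j \<in> R n")
        case True
        then show ?thesis using fun_cong[OF eq, of "(i, j)"] by (simp add: r_def)
      next
        case False
        have "\<forall>i j. M i j \<noteq> 0 \<longrightarrow> i \<in> R n \<and> j \<in> R n" "\<forall>i j. M' i j \<noteq> 0 \<longrightarrow> i \<in> R n \<and> j \<in> R n"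
          using conjunct1[OF M[unfolded Gde_def mem_Collect_eq]] conjunct1[OF M'[unfolded Gde_def mem_Collect_eq]] by auto
        then show ?thesis using False by metis
      qed
    qed
  qed
  show ?thesis using finite_imageD[OF finite_subset[OF sub fin] inj] .
qed

definition idm :: "nat \<Rightarrow> nat \<Rightarrow> nat \<Rightarrow> complex" where "idm n = monm n id (\<lambda>_. 1)"

lemma idm_Gde: "0 < d * e \<Longrightarrow> idm n \<in> Gde d e n"
  unfolding idm_def by (rule monm_Gde) (simp_all add: permutes_id)

lemma mv_idm: "z \<in> cvec n \<Longrightarrow> mv n (idm n) z = z"
  unfolding idm_def mv_monm[OF permutes_id] by (auto simp: cvec_def inv_id)

lemma mv_Gde_inj:
  assumes m: "0 < d * e" and M: "M \<in> Gde d e n"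
  shows "inj_on (mv n M) (cvec n)"
proof -
  obtain s a where sa: "s permutes R n" "\<forall>j\<in>R n. a j ^ (d * e) = 1" "M = monm n s a"
    using Gde_rep[OF m M] by blast
  have "\<forall>j\<in>R n. a j \<noteq> 0" using sa(2) unity_nz[OF m] by blast
  then show ?thesis using mv_inj[OF sa(1)] sa(3) by simp
qed




locale Wg =
  fixes d e n :: nat
  assumes pos: "0 < d * e"
begin

abbreviation "G \<equiv> Gde d e n"
abbreviation "H \<equiv> hyps n (d * e)"
abbreviation "ha M \<equiv> hact n (d * e) M"
abbreviation "ws M S \<equiv> wsign n (d * e) M S"

lemma finite_H: "finite H"
proof -
  have "H \<subseteq> (\<lambda>(i, j, k). E i j k) ` (R n \<times> R n \<times> {..<d * e}) \<union> L ` R n"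
    by (auto simp: hyps_def image_iff)
  then show ?thesis by (rule finite_subset) auto
qed

lemma finG: "finite G" using finite_Gde[OF pos] .
lemma idG: "idm n \<in> G" using idm_Gde[OF pos] .
lemma mulG: "M \<in> G \<Longrightarrow> g \<in> G \<Longrightarrow> mmul n M g \<in> G" using Gde_mmul[OF pos] .

lemma bij_rmul: "g \<in> G \<Longrightarrow> bij_betw (\<lambda>M. mmul n M g) G G"
proof -
  assume g: "g \<in> G"
  have inj: "inj_on (\<lambda>M. mmul n M g) G" using Gde_rmul_inj[OF pos g] .
  have sub: "(\<lambda>M. mmul n M g) ` G \<subseteq> G" using mulG g by auto
  show ?thesis unfolding bij_betw_def using inj endo_inj_surj[OF finG sub inj] by simp
qed

lemma bij_lmul: "g \<in> G \<Longrightarrow> bij_betw (\<lambda>M. mmul n g M) G G"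
proof -
  assume g: "g \<in> G"
  have inj: "inj_on (\<lambda>M. mmul n g M) G" using Gde_lmul_inj[OF pos g] .
  have sub: "(\<lambda>M. mmul n g M) ` G \<subseteq> G" using mulG g by auto
  show ?thesis unfolding bij_betw_def using inj endo_inj_surj[OF finG sub inj] by simp
qed

lemma hact_spec:
  assumes M: "M \<in> G" and h: "h \<in> H"
  shows "ha M h \<in> H \<and> hypset n (d * e) (ha M h) = mv n M ` hypset n (d * e) h"
proof -
  obtain s a where sa: "s permutes R n" "\<forall>j\<in>R n. a j ^ (d * e) = 1" "M = monm n s a"
    using Gde_rep[OF pos M] by blast
  have ex: "\<exists>h'\<in>H. hypset n (d * e) h' = mv n M ` hypset n (d * e) h"
    using hact_ex[OF pos sa(1) sa(2) h] sa(3) by simp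
  obtain h' where h': "h' \<in> H" "hypset n (d * e) h' = mv n M ` hypset n (d * e) h" using ex by blast
  have "\<exists>!h'. h' \<in> H \<and> hypset n (d * e) h' = mv n M ` hypset n (d * e) h"
  proof (rule ex1I[of _ h'])
    show "h' \<in> H \<and> hypset n (d * e) h' = mv n M ` hypset n (d * e) h" using h' by blast
    fix y assume "y \<in> H \<and> hypset n (d * e) y = mv n M ` hypset n (d * e) h"
    then show "y = h'" using hypset_inj[OF pos _ h'(1), of y] h'(2) by auto
  qed
  then show ?thesis unfolding hact_def by (rule theI')
qed

lemma ha_H: "M \<in> G \<Longrightarrow> h \<in> H \<Longrightarrow> ha M h \<in> H" using hact_spec by blast

lemma ha_img_H: "M \<in> G \<Longrightarrow> S \<subseteq> H \<Longrightarrow> ha M ` S \<subseteq> H" using ha_H by blast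

lemma ha_inj: "M \<in> G \<Longrightarrow> inj_on (ha M) H"
proof (rule inj_onI)
  fix x y assume M: "M \<in> G" and x: "x \<in> H" and y: "y \<in> H" and e: "ha M x = ha M y"
  have "mv n M ` hypset n (d * e) x = mv n M ` hypset n (d * e) y"
    using hact_spec[OF M x] hact_spec[OF M y] e by simp
  then have "hypset n (d * e) x = hypset n (d * e) y"
    using inj_on_image_eq_iff[OF mv_Gde_inj[OF pos M] hypset_cvec hypset_cvec] by blast
  then show "x = y" using hypset_inj[OF pos x y] by blast
qed

lemma ha_mmul:
  assumes M: "M \<in> G" and g: "g \<in> G" and h: "h \<in> H"
  shows "ha (mmul n M g) h = ha M (ha g h)"
proof -
  have gh: "ha g h \<in> H" using ha_H[OF g h] .
  have "hypset n (d * e) (ha (mmul n M g) h) = mv n (mmul n M g) ` hypset n (d * e) h"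
    using hact_spec[OF mulG[OF M g] h] by blast
  also have "\<dots> = mv n M ` mv n g ` hypset n (d * e) h"
    by (simp add: mv_mmul image_image)
  also have "\<dots> = hypset n (d * e) (ha M (ha g h))"
    using hact_spec[OF g h] hact_spec[OF M gh] by simp
  finally show ?thesis
    using hypset_inj[OF pos ha_H[OF mulG[OF M g] h] ha_H[OF M gh]] by blast
qed

lemma ha_id: "h \<in> H \<Longrightarrow> ha (idm n) h = h"
proof -
  assume h: "h \<in> H"
  have "hypset n (d * e) (ha (idm n) h) = mv n (idm n) ` hypset n (d * e) h"
    using hact_spec[OF idG h] by blast
  also have "\<dots> = hypset n (d * e) h"
    using mv_idm hypset_cvec[of n "d * e" h] by (auto simp: image_iff) (metis subsetD)+
  finally show ?thesis using hypset_inj[OF pos ha_H[OF idG h] h] by blast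
qed

lemma ws_mmul:
  assumes M: "M \<in> G" and g: "g \<in> G" and S: "S \<subseteq> H"
  shows "ws (mmul n M g) S = ws M (ha g ` S) * ws g S"
proof -
  have fS: "finite S" using finite_subset[OF S finite_H] .
  have "ws (mmul n M g) S = sg (ha M \<circ> ha g) S"
    unfolding wsign_sg using ha_mmul[OF M g] S by (intro sg_cong) auto
  also have "\<dots> = sg (ha g) S * sg (ha M) (ha g ` S)"
    by (rule sg_comp[OF fS inj_on_subset[OF ha_inj[OF g] S] inj_on_subset[OF ha_inj[OF M] ha_img_H[OF g S]]])
  finally show ?thesis by (simp add: wsign_sg)
qed

lemma ws_sq: "ws M S * ws M S = 1"
  unfolding wsign_def by (simp add: power_mult_distrib[symmetric] power_add[symmetric] mult_2[symmetric] power_mult)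

lemma ws_nz: "ws M S \<noteq> 0"
  using ws_sq[of M S] by auto

lemma wact_omega:
  assumes D: "D \<subseteq> H"
  shows "wact n (d * e) M (omega D) T = (if ha M ` D = T then ws M D else 0)"
proof -
  have fin: "finite {S. S \<subseteq> H \<and> ha M ` S = T}"
    by (rule finite_subset[of _ "Pow H"]) (use finite_H in auto)
  have "wact n (d * e) M (omega D) T = (\<Sum>S\<in>{S. S \<subseteq> H \<and> ha M ` S = T}. if D = S then ws M S else 0)"
    unfolding wact_def omega_def by (rule sum.cong) auto
  also have "\<dots> = (if ha M ` D = T then ws M D else 0)"
    using fin D by simp
  finally show ?thesis .
qed

lemma orbsum_eq:
  assumes D: "D \<subseteq> H"
  shows "orbsum d e n D T = (\<Sum>M\<in>G. if ha M ` D = T then ws M D else 0)"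
  unfolding orbsum_def using wact_omega[OF D] by simp

end



definition orb :: "nat \<Rightarrow> nat \<Rightarrow> nat \<Rightarrow> hyp set \<Rightarrow> hyp set set" where
  "orb d e n D = {hact n (d * e) M ` D | M. M \<in> Gde d e n}"

lemma graph_orbits_orb: "graph_orbits d e n = {orb d e n D | D. invariant_graph d e n D}"
  by (simp add: graph_orbits_def orb_def)

context Wg
begin

lemma img_mmul:
  assumes M: "M \<in> G" and g: "g \<in> G" and D: "D \<subseteq> H"
  shows "ha (mmul n M g) ` D = ha M ` ha g ` D"
proof -
  have "ha (mmul n M g) ` D = (\<lambda>h. ha M (ha g h)) ` D"
    by (rule image_cong[OF refl]) (use ha_mmul[OF M g] D in blast)
  then show ?thesis by (simp add: image_image)
qed

lemma img_id: "D \<subseteq> H \<Longrightarrow> ha (idm n) ` D = D"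
proof -
  assume D: "D \<subseteq> H"
  have "ha (idm n) ` D = (\<lambda>h. h) ` D"
    by (rule image_cong[OF refl]) (use ha_id D in blast)
  then show ?thesis by simp
qed

lemma orbsum_move:
  assumes g: "g \<in> G" and D: "D \<subseteq> H"
  shows "orbsum d e n (ha g ` D) T = ws g D * orbsum d e n D T"
proof -
  have gD: "ha g ` D \<subseteq> H" using ha_img_H[OF g D] .
  have "orbsum d e n (ha g ` D) T = (\<Sum>M\<in>G. if ha M ` ha g ` D = T then ws M (ha g ` D) else 0)"
    by (rule orbsum_eq[OF gD])
  also have "\<dots> = (\<Sum>M\<in>G. ws g D * (if ha (mmul n M g) ` D = T then ws (mmul n M g) D else 0))"
  proof (rule sum.cong[OF refl])
    fix M assume M: "M \<in> G"
    have w: "ws (mmul n M g) D = ws M (ha g ` D) * ws g D" by (rule ws_mmul[OF M g D])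
    have "ws g D * ws (mmul n M g) D = ws M (ha g ` D) * (ws g D * ws g D)"
      unfolding w by (simp add: algebra_simps)
    then have w2: "ws g D * ws (mmul n M g) D = ws M (ha g ` D)" using ws_sq[of g D] by simp
    show "(if ha M ` ha g ` D = T then ws M (ha g ` D) else 0) =
          ws g D * (if ha (mmul n M g) ` D = T then ws (mmul n M g) D else 0)"
      using img_mmul[OF M g D] w2 by simp
  qed
  also have "\<dots> = ws g D * (\<Sum>M\<in>G. (if ha (mmul n M g) ` D = T then ws (mmul n M g) D else 0))"
    by (simp add: sum_distrib_left)
  also have "(\<Sum>M\<in>G. (if ha (mmul n M g) ` D = T then ws (mmul n M g) D else 0))
           = (\<Sum>M\<in>G. (if ha M ` D = T then ws M D else 0))"
    by (rule sum.reindex_bij_betw[OF bij_rmul[OF g], where g = "\<lambda>M. if ha M ` D = T then ws M D else 0"])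
  also have "\<dots> = orbsum d e n D T" by (rule orbsum_eq[OF D, symmetric])
  finally show ?thesis .
qed

lemma orbsum_inv:
  assumes g: "g \<in> G" and D: "D \<subseteq> H"
  shows "wact n (d * e) g (orbsum d e n D) = orbsum d e n D"
proof
  fix T
  define A where "A = {S. S \<subseteq> H \<and> ha g ` S = T}"
  have fA: "finite A" unfolding A_def by (rule finite_subset[of _ "Pow H"]) (use finite_H in auto)
  have "wact n (d * e) g (orbsum d e n D) T = (\<Sum>S\<in>A. ws g S * orbsum d e n D S)"
    by (simp add: wact_def A_def)
  also have "\<dots> = (\<Sum>S\<in>A. \<Sum>M\<in>G. if ha M ` D = S then ws g S * ws M D else 0)"
    by (rule sum.cong[OF refl]) (simp add: orbsum_eq[OF D] sum_distrib_left if_distrib cong: if_cong)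
  also have "\<dots> = (\<Sum>M\<in>G. \<Sum>S\<in>A. if ha M ` D = S then ws g S * ws M D else 0)"
    by (rule sum.swap)
  also have "\<dots> = (\<Sum>M\<in>G. if ha M ` D \<in> A then ws g (ha M ` D) * ws M D else 0)"
    using fA by simp
  also have "\<dots> = (\<Sum>M\<in>G. if ha (mmul n g M) ` D = T then ws (mmul n g M) D else 0)"
  proof (rule sum.cong[OF refl])
    fix M assume M: "M \<in> G"
    have MD: "ha M ` D \<subseteq> H" using ha_img_H[OF M D] .
    have "ha M ` D \<in> A \<longleftrightarrow> ha (mmul n g M) ` D = T"
      using img_mmul[OF g M D] MD by (simp add: A_def)
    moreover have "ws (mmul n g M) D = ws g (ha M ` D) * ws M D" by (rule ws_mmul[OF g M D])
    ultimately show "(if ha M ` D \<in> A then ws g (ha M ` D) * ws M D else 0) =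
        (if ha (mmul n g M) ` D = T then ws (mmul n g M) D else 0)" by simp
  qed
  also have "\<dots> = (\<Sum>M\<in>G. (if ha M ` D = T then ws M D else 0))"
    by (rule sum.reindex_bij_betw[OF bij_lmul[OF g], where g = "\<lambda>M. if ha M ` D = T then ws M D else 0"])
  also have "\<dots> = orbsum d e n D T" by (rule orbsum_eq[OF D, symmetric])
  finally show "wact n (d * e) g (orbsum d e n D) T = orbsum d e n D T" .
qed

lemma orbsum_supp:
  assumes D: "D \<subseteq> H" and nz: "orbsum d e n D T \<noteq> 0"
  shows "\<exists>M\<in>G. T = ha M ` D"
proof (rule ccontr)
  assume "\<not> (\<exists>M\<in>G. T = ha M ` D)"
  then have "(\<Sum>M\<in>G. if ha M ` D = T then ws M D else 0) = 0"
    by (intro sum.neutral) auto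
  then show False using nz orbsum_eq[OF D] by simp
qed

lemma orb_sub: "D \<subseteq> H \<Longrightarrow> orb d e n D \<subseteq> Pow H"
  unfolding orb_def using ha_img_H by blast

lemma orb_self: "D \<subseteq> H \<Longrightarrow> D \<in> orb d e n D"
  unfolding orb_def using img_id idG by (metis (mono_tags, lifting) mem_Collect_eq)

lemma orb_move:
  assumes g: "g \<in> G" and D: "D \<subseteq> H"
  shows "orb d e n (ha g ` D) = orb d e n D"
proof
  show "orb d e n (ha g ` D) \<subseteq> orb d e n D"
  proof
    fix S assume "S \<in> orb d e n (ha g ` D)"
    then obtain M where M: "M \<in> G" "S = ha M ` ha g ` D" unfolding orb_def by blast
    then have "S = ha (mmul n M g) ` D" using img_mmul[OF M(1) g D] by simp
    then show "S \<in> orb d e n D" unfolding orb_def using mulG[OF M(1) g] by blast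
  qed
  show "orb d e n D \<subseteq> orb d e n (ha g ` D)"
  proof
    fix S assume "S \<in> orb d e n D"
    then obtain M' where M': "M' \<in> G" "S = ha M' ` D" unfolding orb_def by blast
    have "M' \<in> (\<lambda>M. mmul n M g) ` G" using bij_rmul[OF g] M'(1) by (simp add: bij_betw_def)
    then obtain M where M: "M \<in> G" "M' = mmul n M g" by blast
    then have "S = ha M ` (ha g ` D)" using M'(2) img_mmul[OF M(1) g D] by simp
    then show "S \<in> orb d e n (ha g ` D)" unfolding orb_def using M(1) by blast
  qed
qed

lemma orb_mem: "D \<subseteq> H \<Longrightarrow> S \<in> orb d e n D \<Longrightarrow> orb d e n S = orb d e n D"
proof -
  assume D: "D \<subseteq> H" and "S \<in> orb d e n D"
  then obtain g where g: "g \<in> G" "S = ha g ` D" unfolding orb_def by blast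
  then show ?thesis using orb_move[OF g(1) D] by simp
qed

lemma ws_stab:
  assumes M: "M \<in> G" and S: "S \<subseteq> H" and MS: "ha M ` S = S"
  shows "ws M S = (if evenperm (\<lambda>h. if h \<in> S then ha M h else h) then 1 else -1)"
proof -
  define p where "p = (\<lambda>h. if h \<in> S then ha M h else h)"
  have fS: "finite S" using finite_subset[OF S finite_H] .
  have ip: "inj_on p S"
    using inj_on_subset[OF ha_inj[OF M] S] unfolding p_def inj_on_def by auto
  have "p ` S = ha M ` S" unfolding p_def by (rule image_cong) auto
  then have "bij_betw p S S" using ip MS by (simp add: bij_betw_def)
  then have pp: "p permutes S" by (rule bij_imp_permutes) (simp add: p_def)
  have "ws M S = sg p S" unfolding wsign_sg by (rule sg_cong) (simp add: p_def)
  also have "\<dots> = of_int (sign p)" by (rule sg_permutes[OF pp fS])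
  finally show ?thesis by (simp add: sign_def p_def)
qed

lemma stab_fin: "finite (stab d e n D)"
  unfolding stab_def using finG by simp

lemma orbsum_self:
  assumes D: "invariant_graph d e n D"
  shows "orbsum d e n D D = of_nat (card (stab d e n D)) \<and> card (stab d e n D) > 0"
proof -
  have DH: "D \<subseteq> H" using D unfolding invariant_graph_def by blast
  have "orbsum d e n D D = (\<Sum>M\<in>G. if ha M ` D = D then ws M D else 0)" by (rule orbsum_eq[OF DH])
  also have "\<dots> = (\<Sum>M\<in>G. if ha M ` D = D then 1 else 0)"
  proof (rule sum.cong[OF refl])
    fix M assume M: "M \<in> G"
    show "(if ha M ` D = D then ws M D else 0) = (if ha M ` D = D then 1 else (0::rat))"
    proof (cases "ha M ` D = D")
      case True
      then have "M \<in> stab d e n D" using M by (simp add: stab_def)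
      then have "evenperm (\<lambda>h. if h \<in> D then ha M h else h)" using D unfolding invariant_graph_def by blast
      then show ?thesis using ws_stab[OF M DH True] True by simp
    qed simp
  qed
  also have "\<dots> = of_nat (card {M \<in> G. ha M ` D = D})"
    using sum.inter_filter[OF finG, of "\<lambda>_. (1::rat)" "\<lambda>M. ha M ` D = D"] by simp
  also have "{M \<in> G. ha M ` D = D} = stab d e n D" by (simp add: stab_def)
  finally have 1: "orbsum d e n D D = of_nat (card (stab d e n D))" .
  have "idm n \<in> stab d e n D" using idG img_id[OF DH] by (simp add: stab_def)
  then have "card (stab d e n D) > 0" using stab_fin card_gt_0_iff by blast
  with 1 show ?thesis by blast
qed

lemma orbsum_zero:
  assumes S: "S \<subseteq> H" and ni: "\<not> invariant_graph d e n S"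
  shows "orbsum d e n S T = 0"
proof -
  obtain M where M: "M \<in> stab d e n S" and odd: "\<not> evenperm (\<lambda>h. if h \<in> S then ha M h else h)"
    using ni S unfolding invariant_graph_def by blast
  have MG: "M \<in> G" and MS: "ha M ` S = S" using M by (auto simp: stab_def)
  have w: "ws M S = -1" using ws_stab[OF MG S MS] odd by simp
  have "orbsum d e n S T = orbsum d e n (ha M ` S) T" using MS by simp
  also have "\<dots> = - orbsum d e n S T" using orbsum_move[OF MG S] w by simp
  finally show ?thesis by simp
qed

end



context Wg
begin

lemma main:
  fixes rep :: "hyp set set \<Rightarrow> hyp set"
  assumes reps: "\<forall>Q\<in>graph_orbits d e n. rep Q \<in> Q"
  shows "(\<forall>Q\<in>graph_orbits d e n. orbsum d e n (rep Q) \<noteq> (\<lambda>_. 0))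
       \<and> (\<forall>Q\<in>graph_orbits d e n. orbsum d e n (rep Q) \<in> invariants d e n)
       \<and> (\<forall>Q\<in>graph_orbits d e n. \<forall>T. orbsum d e n (rep Q) T \<noteq> 0 \<longrightarrow> card T = card (rep Q))
       \<and> (\<forall>c :: hyp set set \<Rightarrow> rat.
            (\<forall>T. (\<Sum>Q\<in>graph_orbits d e n. c Q * orbsum d e n (rep Q) T) = 0)
            \<longrightarrow> (\<forall>Q\<in>graph_orbits d e n. c Q = 0))
       \<and> (\<forall>x\<in>invariants d e n. \<exists>c :: hyp set set \<Rightarrow> rat.
            \<forall>T. x T = (\<Sum>Q\<in>graph_orbits d e n. c Q * orbsum d e n (rep Q) T))"
proof -
  define GO where "GO = graph_orbits d e n"
  have invH: "\<And>D. invariant_graph d e n D \<Longrightarrow> D \<subseteq> H" by (simp add: invariant_graph_def)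
  have GOc: "\<And>Q. Q \<in> GO \<Longrightarrow> \<exists>D. invariant_graph d e n D \<and> Q = orb d e n D"
    unfolding GO_def graph_orbits_orb by blast
  have repD: "\<exists>D g. invariant_graph d e n D \<and> Q = orb d e n D \<and> g \<in> G \<and> rep Q = ha g ` D"
    if Q: "Q \<in> GO" for Q
  proof -
    obtain D where D: "invariant_graph d e n D" "Q = orb d e n D" using GOc[OF Q] by blast
    have "rep Q \<in> orb d e n D" using reps Q D(2) by (simp add: GO_def)
    then obtain g where "g \<in> G" "rep Q = ha g ` D" unfolding orb_def by blast
    then show ?thesis using D by blast
  qed
  have repH: "rep Q \<subseteq> H" if Q: "Q \<in> GO" for Q
    using repD[OF Q] ha_img_H invH by blast
  have disj: "Q = Q'" if hq: "Q \<in> GO" "Q' \<in> GO" "S \<in> Q" "S \<in> Q'" for Q Q' S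
  proof -
    obtain D where D: "invariant_graph d e n D" "Q = orb d e n D" using GOc[OF hq(1)] by blast
    obtain D' where D': "invariant_graph d e n D'" "Q' = orb d e n D'" using GOc[OF hq(2)] by blast
    have "orb d e n S = Q" using orb_mem[OF invH[OF D(1)]] D(2) hq(3) by simp
    moreover have "orb d e n S = Q'" using orb_mem[OF invH[OF D'(1)]] D'(2) hq(4) by simp
    ultimately show ?thesis by simp
  qed
  have GOsub: "Q \<subseteq> Pow H" if "Q \<in> GO" for Q
    using GOc[OF that] orb_sub invH by blast
  have finPH: "finite (Pow H)" using finite_H by simp
  have finGO: "finite GO"
    by (rule finite_subset[of _ "Pow (Pow H)"]) (use GOsub finPH in auto)
  have finQ: "finite Q" if "Q \<in> GO" for Q
    using finite_subset[OF GOsub[OF that] finPH] .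
  have key: "\<exists>D. invariant_graph d e n D \<and> D \<in> Q \<and> orbsum d e n (rep Q) D \<noteq> 0" if Q: "Q \<in> GO" for Q
  proof -
    obtain D g where Dg: "invariant_graph d e n D" "Q = orb d e n D" "g \<in> G" "rep Q = ha g ` D"
      using repD[OF Q] by blast
    have DH: "D \<subseteq> H" using invH[OF Dg(1)] .
    have "orbsum d e n (rep Q) D = ws g D * orbsum d e n D D"
      unfolding Dg(4) by (rule orbsum_move[OF Dg(3) DH])
    also have "\<dots> = ws g D * of_nat (card (stab d e n D))" using orbsum_self[OF Dg(1)] by simp
    finally have "orbsum d e n (rep Q) D \<noteq> 0" using orbsum_self[OF Dg(1)] ws_nz[of g D] by simp
    moreover have "D \<in> Q" using orb_self[OF DH] Dg(2) by simp
    ultimately show ?thesis using Dg(1) by blast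
  qed
  have C1: "\<forall>Q\<in>GO. orbsum d e n (rep Q) \<noteq> (\<lambda>_. 0)"
  proof
    fix Q assume Q: "Q \<in> GO"
    then obtain D where "orbsum d e n (rep Q) D \<noteq> 0" using key by blast
    then show "orbsum d e n (rep Q) \<noteq> (\<lambda>_. 0)" by auto
  qed
  have supp: "\<exists>M\<in>G. T = ha M ` rep Q" if Q: "Q \<in> GO" and nz: "orbsum d e n (rep Q) T \<noteq> 0" for Q T
    using orbsum_supp[OF repH[OF Q] nz] .
  have C2: "\<forall>Q\<in>GO. orbsum d e n (rep Q) \<in> invariants d e n"
  proof
    fix Q assume Q: "Q \<in> GO"
    have "orbsum d e n (rep Q) \<in> ext_alg n (d * e)"
      unfolding ext_alg_def using supp[OF Q] ha_img_H[OF _ repH[OF Q]] by blast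
    moreover have "\<forall>M\<in>G. wact n (d * e) M (orbsum d e n (rep Q)) = orbsum d e n (rep Q)"
      using orbsum_inv repH[OF Q] by blast
    ultimately show "orbsum d e n (rep Q) \<in> invariants d e n" by (simp add: invariants_def)
  qed
  have C3: "\<forall>Q\<in>GO. \<forall>T. orbsum d e n (rep Q) T \<noteq> 0 \<longrightarrow> card T = card (rep Q)"
  proof (intro ballI allI impI)
    fix Q T assume Q: "Q \<in> GO" and nz: "orbsum d e n (rep Q) T \<noteq> 0"
    obtain M where M: "M \<in> G" "T = ha M ` rep Q" using supp[OF Q nz] by blast
    show "card T = card (rep Q)" unfolding M(2)
      by (rule card_image[OF inj_on_subset[OF ha_inj[OF M(1)] repH[OF Q]]])
  qed
  have C4: "\<forall>c :: hyp set set \<Rightarrow> rat. (\<forall>T. (\<Sum>Q\<in>GO. c Q * orbsum d e n (rep Q) T) = 0) \<longrightarrow> (\<forall>Q\<in>GO. c Q = 0)"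
  proof (intro allI impI ballI)
    fix c :: "hyp set set \<Rightarrow> rat" and Q
    assume z: "\<forall>T. (\<Sum>Q\<in>GO. c Q * orbsum d e n (rep Q) T) = 0" and Q: "Q \<in> GO"
    obtain D where D: "invariant_graph d e n D" "D \<in> Q" "orbsum d e n (rep Q) D \<noteq> 0" using key[OF Q] by blast
    have "(\<Sum>Q'\<in>GO. c Q' * orbsum d e n (rep Q') D) = (\<Sum>Q'\<in>GO. if Q' = Q then c Q * orbsum d e n (rep Q) D else 0)"
    proof (rule sum.cong[OF refl])
      fix Q' assume Q': "Q' \<in> GO"
      show "c Q' * orbsum d e n (rep Q') D = (if Q' = Q then c Q * orbsum d e n (rep Q) D else 0)"
      proof (cases "Q' = Q")
        case False
        have "orbsum d e n (rep Q') D = 0"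
        proof (rule ccontr)
          assume "orbsum d e n (rep Q') D \<noteq> 0"
          then obtain M where M: "M \<in> G" "D = ha M ` rep Q'" using supp[OF Q'] by blast
          have "D \<in> orb d e n (rep Q')" unfolding orb_def using M by blast
          moreover have "orb d e n (rep Q') = Q'"
          proof -
            obtain D' where D': "invariant_graph d e n D'" "Q' = orb d e n D'" using GOc[OF Q'] by blast
            show ?thesis using orb_mem[OF invH[OF D'(1)]] reps Q' D'(2) by (simp add: GO_def)
          qed
          ultimately have "D \<in> Q'" by simp
          then show False using disj[OF Q Q' D(2)] False by simp
        qed
        then show ?thesis using False by simp
      qed simp
    qed
    also have "\<dots> = c Q * orbsum d e n (rep Q) D" using finGO Q by simp
    finally show "c Q = 0" using z D(3) by simp
  qed
  have C5: "\<forall>x\<in>invariants d e n. \<exists>c :: hyp set set \<Rightarrow> rat. \<forall>T. x T = (\<Sum>Q\<in>GO. c Q * orbsum d e n (rep Q) T)"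
  proof
    fix x assume x: "x \<in> invariants d e n"
    have xinv: "\<And>M. M \<in> G \<Longrightarrow> wact n (d * e) M x = x" using x by (simp add: invariants_def)
    define sgnf where "sgnf Q S = (SOME s. \<forall>T. orbsum d e n S T = s * orbsum d e n (rep Q) T)" for Q S
    have sgn_ok: "\<forall>T. orbsum d e n S T = sgnf Q S * orbsum d e n (rep Q) T" if Q: "Q \<in> GO" and S: "S \<in> Q" for Q S
    proof -
      obtain D g where Dg: "invariant_graph d e n D" "Q = orb d e n D" "g \<in> G" "rep Q = ha g ` D"
        using repD[OF Q] by blast
      have DH: "D \<subseteq> H" using invH[OF Dg(1)] .
      obtain g1 where g1: "g1 \<in> G" "S = ha g1 ` D" using S Dg(2) unfolding orb_def by blast
      have "\<forall>T. orbsum d e n S T = (ws g1 D * ws g D) * orbsum d e n (rep Q) T"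
      proof
        fix T
        have "orbsum d e n (rep Q) T = ws g D * orbsum d e n D T" unfolding Dg(4) by (rule orbsum_move[OF Dg(3) DH])
        then have "ws g D * orbsum d e n (rep Q) T = (ws g D * ws g D) * orbsum d e n D T" by simp
        then have e1: "orbsum d e n D T = ws g D * orbsum d e n (rep Q) T" using ws_sq[of g D] by simp
        show "orbsum d e n S T = (ws g1 D * ws g D) * orbsum d e n (rep Q) T"
          unfolding g1(2) orbsum_move[OF g1(1) DH] e1 by simp
      qed
      then show ?thesis unfolding sgnf_def by (rule someI)
    qed
    define c where "c Q = (\<Sum>S\<in>Q. x S * sgnf Q S) / of_nat (card G)" for Q
    have cG: "card G > 0" using finG idG card_gt_0_iff by blast
    show "\<exists>c :: hyp set set \<Rightarrow> rat. \<forall>T. x T = (\<Sum>Q\<in>GO. c Q * orbsum d e n (rep Q) T)"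
    proof (intro exI allI)
      fix T
      have "of_nat (card G) * x T = (\<Sum>M\<in>G. wact n (d * e) M x T)"
        using xinv by simp
      also have "\<dots> = (\<Sum>M\<in>G. \<Sum>S\<in>Pow H. if ha M ` S = T then ws M S * x S else 0)"
      proof (rule sum.cong[OF refl])
        fix M assume M: "M \<in> G"
        have "{S. S \<subseteq> H \<and> ha M ` S = T} = {S \<in> Pow H. ha M ` S = T}" by auto
        then show "wact n (d * e) M x T = (\<Sum>S\<in>Pow H. if ha M ` S = T then ws M S * x S else 0)"
          unfolding wact_def using sum.inter_filter[OF finPH, of "\<lambda>S. ws M S * x S" "\<lambda>S. ha M ` S = T"] by simp
      qed
      also have "\<dots> = (\<Sum>S\<in>Pow H. \<Sum>M\<in>G. if ha M ` S = T then ws M S * x S else 0)"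
        by (rule sum.swap)
      also have "\<dots> = (\<Sum>S\<in>Pow H. x S * orbsum d e n S T)"
      proof (rule sum.cong[OF refl])
        fix S assume S: "S \<in> Pow H"
        show "(\<Sum>M\<in>G. if ha M ` S = T then ws M S * x S else 0) = x S * orbsum d e n S T"
          using S by (simp add: orbsum_eq sum_distrib_left if_distrib mult.commute cong: if_cong)
      qed
      also have "\<dots> = (\<Sum>S\<in>\<Union>GO. x S * orbsum d e n S T)"
      proof (rule sum.mono_neutral_right[OF finPH])
        show "\<Union>GO \<subseteq> Pow H" using GOsub by blast
        show "\<forall>S\<in>Pow H - \<Union>GO. x S * orbsum d e n S T = 0"
        proof
          fix S assume S: "S \<in> Pow H - \<Union>GO"
          have "\<not> invariant_graph d e n S"
          proof
            assume "invariant_graph d e n S"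
            then have "orb d e n S \<in> GO" unfolding GO_def graph_orbits_orb by blast
            moreover have "S \<in> orb d e n S" using orb_self S by blast
            ultimately show False using S by blast
          qed
          then show "x S * orbsum d e n S T = 0" using orbsum_zero S by simp
        qed
      qed
      also have "\<dots> = (\<Sum>Q\<in>GO. \<Sum>S\<in>Q. x S * orbsum d e n S T)"
        using sum.Union_disjoint[of GO "\<lambda>S. x S * orbsum d e n S T"] finQ disj by (auto simp: o_def)
      also have "\<dots> = (\<Sum>Q\<in>GO. (\<Sum>S\<in>Q. x S * sgnf Q S) * orbsum d e n (rep Q) T)"
      proof (rule sum.cong[OF refl])
        fix Q assume Q: "Q \<in> GO"
        have "(\<Sum>S\<in>Q. x S * orbsum d e n S T) = (\<Sum>S\<in>Q. x S * sgnf Q S * orbsum d e n (rep Q) T)"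
          by (rule sum.cong[OF refl]) (use sgn_ok[OF Q] in simp)
        then show "(\<Sum>S\<in>Q. x S * orbsum d e n S T) = (\<Sum>S\<in>Q. x S * sgnf Q S) * orbsum d e n (rep Q) T"
          by (simp add: sum_distrib_right)
      qed
      finally have "of_nat (card G) * x T = (\<Sum>Q\<in>GO. (\<Sum>S\<in>Q. x S * sgnf Q S) * orbsum d e n (rep Q) T)" .
      then have "x T = (\<Sum>Q\<in>GO. (\<Sum>S\<in>Q. x S * sgnf Q S) * orbsum d e n (rep Q) T) / of_nat (card G)"
        using cG by (simp add: field_simps)
      also have "\<dots> = (\<Sum>Q\<in>GO. (\<Sum>S\<in>Q. x S * sgnf Q S) * orbsum d e n (rep Q) T / of_nat (card G))"
        by (rule sum_divide_distrib)
      also have "\<dots> = (\<Sum>Q\<in>GO. c Q * orbsum d e n (rep Q) T)"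
        by (rule sum.cong[OF refl]) (simp add: c_def)
      finally show "x T = (\<Sum>Q\<in>GO. c Q * orbsum d e n (rep Q) T)" .
    qed
  qed
  show ?thesis using C1 C2 C3 C4 C5 unfolding GO_def by blast
qed

end

theorem theorem3p18:
  fixes d e n :: nat and rep :: "hyp set set \<Rightarrow> hyp set"
  assumes "d > 1" and "e \<ge> 1" and "n \<ge> 1"
    and "\<forall>Q\<in>graph_orbits d e n. rep Q \<in> Q"
  shows "(\<forall>Q\<in>graph_orbits d e n. orbsum d e n (rep Q) \<noteq> (\<lambda>_. 0))
       \<and> (\<forall>Q\<in>graph_orbits d e n. orbsum d e n (rep Q) \<in> invariants d e n)
       \<and> (\<forall>Q\<in>graph_orbits d e n. \<forall>T. orbsum d e n (rep Q) T \<noteq> 0 \<longrightarrow> card T = card (rep Q))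
       \<and> (\<forall>c :: hyp set set \<Rightarrow> rat.
            (\<forall>T. (\<Sum>Q\<in>graph_orbits d e n. c Q * orbsum d e n (rep Q) T) = 0)
            \<longrightarrow> (\<forall>Q\<in>graph_orbits d e n. c Q = 0))
       \<and> (\<forall>x\<in>invariants d e n. \<exists>c :: hyp set set \<Rightarrow> rat.
            \<forall>T. x T = (\<Sum>Q\<in>graph_orbits d e n. c Q * orbsum d e n (rep Q) T))"
proof -
  have "0 < d * e" using assms(1,2) by simp
  then interpret Wg d e n by unfold_locales
  show ?thesis using main[OF assms(4)] .
qed


end
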